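(* The following are equivalent: (i) $\sup_{d\in\mathbb N} n^{X_d}(\varepsilon)<\infty$ for every $\varepsilon\in(0,1)$; (ii) $\displaystyle\lim_{t\to0}\ \sup_{d\in\mathbb N}\sum_{k=1}^\infty \bar\lambda^{X_d}_k\,\mathbf 1\bigl(\bar\lambda^{X_d}_k<t\bigr)=0$.
   Context: For each $d\in\mathbb N$, $X_d$ is a random element of a separable Hilbert space $H_d$ with $\mathbb E X_d=0$ and $\mathbb E\|X_d\|_{H_d}^2<\infty$. For a centered Hilbert-space random element $Z$ with finite second moment, $\lambda^Z_1\ge\lambda^Z_2\ge\dots\ge 0$ denote the eigenvalues of its covariance operator $K^Z$ listed with multiplicity (padded with zeros if there are finitely many), $\Lambda^Z=\sum_k\lambda^Z_k=\mathbb E\|Z\|^2$, and $\bar\lambda^Z_k=\lambda^Z_k/\Lambda^Z$. It is assumed that $\lambda^{X_d}_1>0$ for all $d$. The average case approximation complexity is $n^{X_d}(\varepsilon)=\min\{n\in\mathbb N: e^{X_d}(n)\le \varepsilon\, e^{X_d}(0)\}$ for $\varepsilon\in(0,1)$, where $e^{X_d}(0)=(\mathbb E\|X_d\|^2)^{1/2}$ and $e^{X_d}(n)$ is the infimum of $(\mathbb E\|X_d-\sum_{m=1}^n l_m(X_d)\psi_m\|^2)^{1/2}$ over all $\psi_m\in H_d$, $l_m\in H_d^*$; equivalently $n^{X_d}(\varepsilon)=\min\{n\in\mathbb N:\ \sum_{k>n}\bar\lambda^{X_d}_k\le\varepsilon^2\}$. $\mathbf 1(A)$ is the indicator of the proposition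 $A$. *)

theory Defs
  imports "HOL-Analysis.Analysis"
begin

text \<open>A sequence of covariance eigenvalues (0-based: lam 0 is the paper's lambda_1),
  listed with multiplicity in nonincreasing order, nonnegative, summable
  (trace class, sum = E||X||^2), and with positive top eigenvalue.\<close>
definition eigen_seq :: "(nat \<Rightarrow> real) \<Rightarrow> bool" where
  "eigen_seq lam \<longleftrightarrow> (\<forall>k. 0 \<le> lam k) \<and> decseq lam \<and> summable lam \<and> 0 < lam 0"

definition trace_of :: "(nat \<Rightarrow> real) \<Rightarrow> real" where
  "trace_of lam = (\<Sum>k. lam k)"

definition lbar :: "(nat \<Rightarrow> real) \<Rightarrow> nat \<Rightarrow> real" where
  "lbar lam k = lam k / trace_of lam"

text \<open>Average case approximation complexity:
  n(eps) = min { n : sum_{k>n} bar-lambda_k <= eps^2 } (paper 1-based indices;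
  in 0-based indexing the tail after n terms is sum_j lbar (j + n)).\<close>
definition n_avg :: "(nat \<Rightarrow> real) \<Rightarrow> real \<Rightarrow> nat" where
  "n_avg lam eps = (LEAST n. (\<Sum>j. lbar lam (j + n)) \<le> eps\<^sup>2)"

end

theory Submission
  imports Defs
begin

definition Sf :: "(nat \<Rightarrow> real) \<Rightarrow> real \<Rightarrow> real" where
  "Sf l t = (\<Sum>k. l k * (if l k < t then 1 else 0))"

lemma Sf_summable:
  assumes "\<And>k. 0 \<le> l k" "summable l"
  shows "summable (\<lambda>k. l k * (if l k < t then 1 else (0::real)))"
  by (rule summable_comparison_test[OF _ assms(2)]) (auto intro!: exI[of _ 0] simp: assms(1))

lemma Sf_nonneg:
  assumes "\<And>k. 0 \<le> l k" "summable l"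
  shows "0 \<le> Sf l t"
  unfolding Sf_def by (rule suminf_nonneg[OF Sf_summable[OF assms]]) (simp add: assms(1))

lemma Sf_le_one:
  assumes "\<And>k. 0 \<le> l k" "summable l"
  shows "Sf l t \<le> suminf l"
  unfolding Sf_def by (rule suminf_le[OF _ Sf_summable[OF assms] assms(2)]) (simp add: assms(1))

lemma lemA:
  assumes nn: "\<And>k. 0 \<le> l k" and sl: "summable l" and tl: "(\<Sum>j. l (j + N)) \<le> e"
  shows "Sf l t \<le> e + real N * \<bar>t\<bar>"
proof -
  let ?f = "\<lambda>k. l k * (if l k < t then 1 else (0::real))"
  have sf: "summable ?f" by (rule Sf_summable[OF nn sl])
  have "Sf l t = (\<Sum>j. ?f (j + N)) + (\<Sum>i<N. ?f i)"
    unfolding Sf_def by (rule suminf_split_initial_segment[OF sf])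
  moreover have "(\<Sum>j. ?f (j + N)) \<le> (\<Sum>j. l (j + N))"
    apply (rule suminf_le)
    using nn apply simp
    using summable_ignore_initial_segment[OF sf, of N] apply simp
    using summable_ignore_initial_segment[OF sl, of N] apply simp
    done
  moreover have "(\<Sum>i<N. ?f i) \<le> (\<Sum>i<N. \<bar>t\<bar>)"
    by (rule sum_mono) auto
  ultimately show ?thesis using tl by simp
qed

lemma lemB:
  assumes nn: "\<And>k. 0 \<le> l k" and sl: "summable l" and dl: "decseq l"
    and s1: "suminf l = 1" and t: "0 < t"
  shows "(\<Sum>j. l (j + nat \<lceil>1/t\<rceil>)) \<le> Sf l t"
proof -
  define m where "m = nat \<lceil>1/t\<rceil>"
  have small: "l k < t" if "k \<ge> m" for k
  proof (rule ccontr)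
    assume "\<not> l k < t"
    moreover have "l k \<le> l m" using decseqD[OF dl that] .
    ultimately have lm: "l m \<ge> t" by linarith
    have "\<forall>i\<in>{..m}. t \<le> l i"
    proof
      fix i assume "i \<in> {..m}"
      then have "l m \<le> l i" using decseqD[OF dl, of i m] by simp
      then show "t \<le> l i" using lm by linarith
    qed
    then have "(\<Sum>i\<in>{..m}. t) \<le> (\<Sum>i\<in>{..m}. l i)" by (intro sum_mono) auto
    also have "\<dots> \<le> suminf l" by (rule sum_le_suminf[OF sl]) (auto simp: nn)
    finally have "real (Suc m) * t \<le> 1" using s1 by simp
    moreover have "real m \<ge> 1/t" unfolding m_def by linarith
    then have "real m * t \<ge> 1" using t by (simp add: field_simps)
    ultimately show False using t by (simp add: algebra_simps)
  qed
  let ?f = "\<lambda>k. l k * (if l k < t then 1 else (0::real))"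
  have sf: "summable ?f" by (rule Sf_summable[OF nn sl])
  have "Sf l t = (\<Sum>j. ?f (j + m)) + (\<Sum>i<m. ?f i)"
    unfolding Sf_def by (rule suminf_split_initial_segment[OF sf])
  moreover have "(\<Sum>j. ?f (j + m)) = (\<Sum>j. l (j + m))"
    using small by simp
  moreover have "0 \<le> (\<Sum>i<m. ?f i)" by (rule sum_nonneg) (simp add: nn)
  ultimately show ?thesis unfolding m_def[symmetric] by simp
qed

lemma lbar_props:
  assumes "eigen_seq lam"
  shows "\<And>k. 0 \<le> lbar lam k" "summable (lbar lam)" "decseq (lbar lam)" "suminf (lbar lam) = 1"
proof -
  have nn: "\<And>k. 0 \<le> lam k" and dl: "decseq lam" and sl: "summable lam" and p: "0 < lam 0"
    using assms unfolding eigen_seq_def by auto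
  have "lam 0 \<le> suminf lam" using sum_le_suminf[OF sl, of "{0}"] nn by auto
  then have T: "0 < trace_of lam" unfolding trace_of_def using p by simp
  show "\<And>k. 0 \<le> lbar lam k" unfolding lbar_def using nn T by simp
  show "summable (lbar lam)" unfolding lbar_def using sl by simp
  show "decseq (lbar lam)" unfolding lbar_def decseq_def using dl T
    by (auto simp: decseq_def divide_right_mono)
  show "suminf (lbar lam) = 1" unfolding lbar_def
    using suminf_divide[OF sl, of "trace_of lam"] T by (simp add: trace_of_def)
qed

theorem proposition3:
  fixes lam :: "nat \<Rightarrow> nat \<Rightarrow> real"
  assumes "\<And>d. eigen_seq (lam d)"
  shows "(\<forall>eps. 0 < eps \<and> eps < 1 \<longrightarrow> bdd_above (range (\<lambda>d. n_avg (lam d) eps)))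
     \<longleftrightarrow> ((\<lambda>t. SUP d. (\<Sum>k. lbar (lam d) k * (if lbar (lam d) k < t then 1 else 0)))
            \<longlongrightarrow> 0) (at 0)"
proof -
  note P = lbar_props[OF assms]
  have F: "(\<lambda>t. SUP d. (\<Sum>k. lbar (lam d) k * (if lbar (lam d) k < t then 1 else 0)))
     = (\<lambda>t. SUP d. Sf (lbar (lam d)) t)" unfolding Sf_def by simp
  have bdd: "bdd_above (range (\<lambda>d. Sf (lbar (lam d)) t))" for t
    using Sf_le_one[OF P(1) P(2)] P(4) by (intro bdd_aboveI2) auto
  have Sle: "Sf (lbar (lam d)) t \<le> (SUP d. Sf (lbar (lam d)) t)" for d t
    by (rule cSUP_upper[OF _ bdd]) auto
  show ?thesis unfolding F
  proof
    assume H: "\<forall>eps. 0 < eps \<and> eps < 1 \<longrightarrow> bdd_above (range (\<lambda>d. n_avg (lam d) eps))"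
    show "((\<lambda>t. SUP d. Sf (lbar (lam d)) t) \<longlongrightarrow> 0) (at 0)"
    proof (rule tendstoI)
      fix r :: real assume r: "0 < r"
      define e where "e = min (1/2) (r/4)"
      have e: "0 < e" "e < 1" "2 * e < r" using r unfolding e_def by auto
      define eps where "eps = sqrt e"
      have eps: "0 < eps" "eps < 1" "eps\<^sup>2 = e" using e unfolding eps_def by auto
      obtain B where B: "\<And>d. n_avg (lam d) eps \<le> B"
        using H eps by (auto simp: bdd_above_def)
      have tail: "(\<Sum>j. lbar (lam d) (j + n_avg (lam d) eps)) \<le> eps\<^sup>2" for d
      proof -
        obtain N where "\<forall>n\<ge>N. norm (\<Sum>i. lbar (lam d) (i + n)) < eps\<^sup>2"
          using suminf_exist_split[OF _ P(2)] eps by (metis zero_less_power)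
        then have "norm (\<Sum>i. lbar (lam d) (i + N)) < eps\<^sup>2" by blast
        then have ex: "\<exists>n. (\<Sum>j. lbar (lam d) (j + n)) \<le> eps\<^sup>2"
          by (intro exI[of _ N]) simp
        show ?thesis unfolding n_avg_def by (rule LeastI_ex[OF ex])
      qed
      have bound: "Sf (lbar (lam d)) t \<le> e + real B * \<bar>t\<bar>" for d t
      proof -
        have "Sf (lbar (lam d)) t \<le> e + real (n_avg (lam d) eps) * \<bar>t\<bar>"
          using lemA[OF P(1) P(2) tail] eps by simp
        also have "\<dots> \<le> e + real B * \<bar>t\<bar>"
          using B[of d] by (simp add: mult_right_mono)
        finally show ?thesis .
      qed
      have "\<forall>\<^sub>F t in at 0. \<bar>t\<bar> < e / (real B + 1)"
        unfolding eventually_at using e by (intro exI[of _ "e / (real B + 1)"]) auto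
      then show "\<forall>\<^sub>F t in at 0. dist (SUP d. Sf (lbar (lam d)) t) 0 < r"
      proof (rule eventually_mono)
        fix t :: real assume t: "\<bar>t\<bar> < e / (real B + 1)"
        have "real B * \<bar>t\<bar> \<le> (real B + 1) * \<bar>t\<bar>" by (simp add: mult_right_mono)
        also have "\<dots> \<le> e" using t by (simp add: field_simps)
        finally have Bt: "real B * \<bar>t\<bar> \<le> e" .
        have up': "Sf (lbar (lam d)) t \<le> e + e" for d
          using bound[of d t] Bt by linarith
        have up: "(SUP d. Sf (lbar (lam d)) t) \<le> e + e"
          by (rule cSUP_least) (use up' in auto)
        have lo: "0 \<le> (SUP d. Sf (lbar (lam d)) t)"
          using Sle[of 0 t] Sf_nonneg[OF P(1) P(2)] by (meson order_trans)
        show "dist (SUP d. Sf (lbar (lam d)) t) 0 < r" using up lo e by simp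
      qed
    qed
  next
    assume H: "((\<lambda>t. SUP d. Sf (lbar (lam d)) t) \<longlongrightarrow> 0) (at 0)"
    show "\<forall>eps. 0 < eps \<and> eps < 1 \<longrightarrow> bdd_above (range (\<lambda>d. n_avg (lam d) eps))"
    proof (intro allI impI)
      fix eps :: real assume eps: "0 < eps \<and> eps < 1"
      then have "eps\<^sup>2 > 0" by simp
      from tendstoD[OF H this] obtain \<delta> where \<delta>: "\<delta> > 0"
        and h: "\<And>x. x \<noteq> 0 \<Longrightarrow> dist x 0 < \<delta> \<Longrightarrow> dist (SUP d. Sf (lbar (lam d)) x) 0 < eps\<^sup>2"
        by (auto simp: eventually_at)
      define t where "t = \<delta> / 2"
      have t: "0 < t" "t \<noteq> 0" "dist t 0 < \<delta>" using \<delta> unfolding t_def by auto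
      have Ft: "(SUP d. Sf (lbar (lam d)) t) < eps\<^sup>2" using h[OF t(2) t(3)] by simp
      have "n_avg (lam d) eps \<le> nat \<lceil>1/t\<rceil>" for d
      proof -
        have "(\<Sum>j. lbar (lam d) (j + nat \<lceil>1/t\<rceil>)) \<le> Sf (lbar (lam d)) t"
          by (rule lemB[OF P(1) P(2) P(3) P(4) t(1)])
        also have "\<dots> \<le> eps\<^sup>2" using Sle[of d t] Ft by simp
        finally show ?thesis unfolding n_avg_def by (rule Least_le)
      qed
      then show "bdd_above (range (\<lambda>d. n_avg (lam d) eps))" by (intro bdd_aboveI2) auto
    qed
  qed
qed

end
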